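(* Every sizeable graph has at least $23$ vertices.
   Context: A simplicial graph $\Gamma$ is sizeable if it is bipartite on vertex sets $A$ and $B$, contains no cycle of length $4$, and there are partitions $A=A_0\sqcup A_1$, $B=B_0\sqcup B_1$ such that each induced subgraph $\Gamma(A_s\sqcup B_t)$, $s,t\in\{0,1\}$, is connected. *)

theory Defs
  imports Main
begin

definition simple_graph :: "'a set \<Rightarrow> ('a \<Rightarrow> 'a \<Rightarrow> bool) \<Rightarrow> bool" where
  "simple_graph V E \<longleftrightarrow>
     (\<forall>x y. E x y \<longrightarrow> x \<in> V \<and> y \<in> V) \<and>
     (\<forall>x y. E x y \<longrightarrow> E y x) \<and>
     (\<forall>x. \<not> E x x)"

definition induced_connected :: "('a \<Rightarrow> 'a \<Rightarrow> bool) \<Rightarrow> 'a set \<Rightarrow> bool" where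
  "induced_connected E S \<longleftrightarrow>
     S \<noteq> {} \<and>
     (\<forall>x\<in>S. \<forall>y\<in>S. (\<lambda>u v. u \<in> S \<and> v \<in> S \<and> E u v)\<^sup>*\<^sup>* x y)"

definition bipartite_on :: "'a set \<Rightarrow> ('a \<Rightarrow> 'a \<Rightarrow> bool) \<Rightarrow> 'a set \<Rightarrow> 'a set \<Rightarrow> bool" where
  "bipartite_on V E A B \<longleftrightarrow>
     A \<inter> B = {} \<and> A \<union> B = V \<and>
     (\<forall>x y. E x y \<longrightarrow> (x \<in> A \<and> y \<in> B) \<or> (x \<in> B \<and> y \<in> A))"

definition has_4_cycle :: "('a \<Rightarrow> 'a \<Rightarrow> bool) \<Rightarrow> bool" where
  "has_4_cycle E \<longleftrightarrow>
     (\<exists>a b c d. distinct [a, b, c, d] \<and> E a b \<and> E b c \<and> E c d \<and> E d a)"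

definition sizeable :: "'a set \<Rightarrow> ('a \<Rightarrow> 'a \<Rightarrow> bool) \<Rightarrow> bool" where
  "sizeable V E \<longleftrightarrow>
     simple_graph V E \<and>
     (\<exists>A B. bipartite_on V E A B \<and> \<not> has_4_cycle E \<and>
        (\<exists>A0 A1 B0 B1.
           A0 \<noteq> {} \<and> A1 \<noteq> {} \<and> B0 \<noteq> {} \<and> B1 \<noteq> {} \<and>
           A0 \<inter> A1 = {} \<and> A0 \<union> A1 = A \<and>
           B0 \<inter> B1 = {} \<and> B0 \<union> B1 = B \<and>
           induced_connected E (A0 \<union> B0) \<and> induced_connected E (A0 \<union> B1) \<and>
           induced_connected E (A1 \<union> B0) \<and> induced_connected E (A1 \<union> B1)))"

end

theory Submission
  imports Defs "HOL-Analysis.Convex"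
begin


definition lin :: "'b set \<Rightarrow> ('b \<Rightarrow> 'a set) \<Rightarrow> bool" where
  "lin Bl F \<longleftrightarrow> (\<forall>b\<in>Bl. \<forall>b'\<in>Bl. b \<noteq> b' \<longrightarrow>
      (\<forall>s t. s \<noteq> t \<longrightarrow> s \<in> F b \<longrightarrow> t \<in> F b \<longrightarrow> s \<in> F b' \<longrightarrow> t \<in> F b' \<longrightarrow> False))"

lemma local_bound:
  assumes "lin Bl F" "finite S" "finite Bl"
  shows "(\<Sum>b\<in>{b\<in>Bl. z \<in> F b}. card (F b \<inter> S - {z})) \<le> card (S - {z})"
proof -
  let ?I = "{b\<in>Bl. z \<in> F b}"
  have "(\<Sum>b\<in>?I. card (F b \<inter> S - {z})) = card (\<Union>b\<in>?I. F b \<inter> S - {z})"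
  proof (rule card_UN_disjoint[symmetric])
    show "finite ?I" using assms by auto
    show "\<forall>i\<in>?I. finite (F i \<inter> S - {z})" using assms by auto
    show "\<forall>i\<in>?I. \<forall>j\<in>?I. i \<noteq> j \<longrightarrow> (F i \<inter> S - {z}) \<inter> (F j \<inter> S - {z}) = {}"
      using assms(1) unfolding lin_def by blast
  qed
  also have "\<dots> \<le> card (S - {z})"
    by (rule card_mono) (use assms in auto)
  finally show ?thesis .
qed

lemma dcount:
  assumes "finite S" "finite Bl"
  shows "(\<Sum>z\<in>S. \<Sum>b\<in>{b\<in>Bl. z \<in> F b}. g z b) = (\<Sum>b\<in>Bl. \<Sum>z\<in>F b \<inter> S. g z b)"
proof -
  have "(\<Sum>z\<in>S. \<Sum>b\<in>{b. b\<in>Bl \<and> z \<in> F b}. g z b) = (\<Sum>b\<in>Bl. \<Sum>z\<in>{z. z\<in>S \<and> z \<in> F b}. g z b)"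
    by (rule sum.swap_restrict[OF assms])
  moreover have "\<And>b. {z. z\<in>S \<and> z \<in> F b} = F b \<inter> S" by auto
  ultimately show ?thesis by simp
qed

lemma pair_diag:
  assumes "lin Bl F" "finite S" "finite Bl"
  shows "(\<Sum>b\<in>Bl. card (F b \<inter> S) * (card (F b \<inter> S) - 1)) \<le> card S * (card S - 1)"
proof -
  have "(\<Sum>b\<in>Bl. card (F b \<inter> S) * (card (F b \<inter> S) - 1))
      = (\<Sum>b\<in>Bl. \<Sum>z\<in>F b \<inter> S. card (F b \<inter> S - {z}))"
  proof (rule sum.cong[OF refl])
    fix b assume "b \<in> Bl"
    have "(\<Sum>z\<in>F b \<inter> S. card (F b \<inter> S - {z})) = (\<Sum>z\<in>F b \<inter> S. card (F b \<inter> S) - 1)"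
      by (rule sum.cong[OF refl]) (use assms in auto)
    thus "card (F b \<inter> S) * (card (F b \<inter> S) - 1) = (\<Sum>z\<in>F b \<inter> S. card (F b \<inter> S - {z}))"
      by simp
  qed
  also have "\<dots> = (\<Sum>z\<in>S. \<Sum>b\<in>{b\<in>Bl. z \<in> F b}. card (F b \<inter> S - {z}))"
    by (rule dcount[symmetric]) (use assms in auto)
  also have "\<dots> \<le> (\<Sum>z\<in>S. card (S - {z}))"
    by (rule sum_mono) (rule local_bound[OF assms])
  also have "\<dots> = card S * (card S - 1)"
    using assms by simp
  finally show ?thesis .
qed

lemma pair_cross:
  assumes "lin Bl F" "finite S" "finite T" "finite Bl" "S \<inter> T = {}"
  shows "(\<Sum>b\<in>Bl. card (F b \<inter> T) * card (F b \<inter> S)) \<le> card T * card S"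
proof -
  have "(\<Sum>b\<in>Bl. card (F b \<inter> T) * card (F b \<inter> S))
      = (\<Sum>b\<in>Bl. \<Sum>z\<in>F b \<inter> T. card (F b \<inter> S - {z}))"
  proof (rule sum.cong[OF refl])
    fix b assume "b \<in> Bl"
    have "(\<Sum>z\<in>F b \<inter> T. card (F b \<inter> S - {z})) = (\<Sum>z\<in>F b \<inter> T. card (F b \<inter> S))"
      by (rule sum.cong[OF refl]) (use assms in \<open>auto intro: arg_cong[where f=card]\<close>)
    thus "card (F b \<inter> T) * card (F b \<inter> S) = (\<Sum>z\<in>F b \<inter> T. card (F b \<inter> S - {z}))"
      by simp
  qed
  also have "\<dots> = (\<Sum>z\<in>T. \<Sum>b\<in>{b\<in>Bl. z \<in> F b}. card (F b \<inter> S - {z}))"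
    by (rule dcount[symmetric]) (use assms in auto)
  also have "\<dots> \<le> (\<Sum>z\<in>T. card (S - {z}))"
    by (rule sum_mono) (rule local_bound[OF assms(1,2,4)])
  also have "\<dots> = card T * card S"
  proof -
    have "\<And>z. z \<in> T \<Longrightarrow> S - {z} = S" using assms(5) by auto
    thus ?thesis by simp
  qed
  finally show ?thesis .
qed



definition edges2 :: "('a \<Rightarrow> 'a \<Rightarrow> bool) \<Rightarrow> 'a set \<Rightarrow> 'a set set" where
  "edges2 E T = {{u,v} | u v. u \<in> T \<and> v \<in> T \<and> E u v}"

lemma cross_edge:
  assumes "induced_connected E S" "T \<subseteq> S" "x \<in> T" "y \<in> S" "y \<notin> T"
  shows "\<exists>u\<in>T. \<exists>v\<in>S. v \<notin> T \<and> E u v"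
proof -
  have "x \<in> S" using assms by auto
  hence p: "(\<lambda>u v. u \<in> S \<and> v \<in> S \<and> E u v)\<^sup>*\<^sup>* x y"
    using assms(1,4) unfolding induced_connected_def by blast
  have "y \<notin> T \<longrightarrow> (\<exists>u\<in>T. \<exists>v\<in>S. v \<notin> T \<and> E u v)"
    using p
  proof (induction rule: rtranclp_induct)
    case base
    then show ?case using assms(3) by auto
  next
    case (step y' z)
    show ?case
    proof
      assume "z \<notin> T"
      show "\<exists>u\<in>T. \<exists>v\<in>S. v \<notin> T \<and> E u v"
      proof (cases "y' \<in> T")
        case True
        then show ?thesis using step.hyps(2) \<open>z \<notin> T\<close> by blast
      next
        case False
        then show ?thesis using step.IH by blast
      qed
    qed
  qed
  thus ?thesis using assms(5) by blast
qed

lemma finite_edges2: "finite T \<Longrightarrow> finite (edges2 E T)"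
  by (rule finite_subset[of _ "Pow T"]) (auto simp: edges2_def)

lemma edges2_mono: "T \<subseteq> T' \<Longrightarrow> edges2 E T \<subseteq> edges2 E T'"
  unfolding edges2_def by blast

lemma conn_grow:
  assumes "finite S" "induced_connected E S"
  shows "k < card S \<Longrightarrow> \<exists>T\<subseteq>S. card T = Suc k \<and> k \<le> card (edges2 E T)"
proof (induction k)
  case 0
  obtain x where "x \<in> S" using assms unfolding induced_connected_def by blast
  thus ?case by (intro exI[of _ "{x}"]) auto
next
  case (Suc k)
  then obtain T where T: "T \<subseteq> S" "card T = Suc k" "k \<le> card (edges2 E T)" by auto
  have fT: "finite T" using T(1) assms(1) finite_subset by blast
  have "T \<noteq> S" using T(2) Suc.prems by auto
  then obtain y where y: "y \<in> S" "y \<notin> T" using T(1) by blast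
  obtain x where x: "x \<in> T" using T(2) by (metis card.empty ex_in_conv nat.simps(3))
  obtain u v where uv: "u \<in> T" "v \<in> S" "v \<notin> T" "E u v"
    using cross_edge[OF assms(2) T(1) x y] by blast
  let ?T' = "insert v T"
  have "insert {u,v} (edges2 E T) \<subseteq> edges2 E ?T'"
    using edges2_mono[of T ?T' E] uv unfolding edges2_def by blast
  moreover have "{u,v} \<notin> edges2 E T"
    using uv(3) unfolding edges2_def by (auto simp: doubleton_eq_iff)
  ultimately have "Suc (card (edges2 E T)) \<le> card (edges2 E ?T')"
    using finite_edges2[of ?T' E] fT
    by (metis card_insert_disjoint card_mono finite_edges2 finite_insert)
  moreover have "card ?T' = Suc (Suc k)" using T(2) uv(3) fT by simp
  ultimately show ?case using T uv by (intro exI[of _ ?T']) auto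
qed

lemma conn_edges:
  assumes "finite S" "induced_connected E S"
  shows "card S - 1 \<le> card (edges2 E S)"
proof -
  have "card S > 0" using assms unfolding induced_connected_def by auto
  then obtain T where T: "T \<subseteq> S" "card T = Suc (card S - 1)" "card S - 1 \<le> card (edges2 E T)"
    using conn_grow[OF assms, of "card S - 1"] by auto
  have "T = S" using T(1,2) assms(1) \<open>card S > 0\<close>
    by (metis Suc_diff_1 card_subset_eq)
  thus ?thesis using T by simp
qed

abbreviation nb :: "('a \<Rightarrow> 'a \<Rightarrow> bool) \<Rightarrow> 'a \<Rightarrow> 'a set" where
  "nb E b \<equiv> Collect (E b)"

lemma edges_bip:
  assumes bip: "bipartite_on V E A B" and sg: "simple_graph V E"
    and As: "As \<subseteq> A" and Bt: "Bt \<subseteq> B" and fin: "finite As" "finite Bt"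
    and conn: "induced_connected E (As \<union> Bt)"
  shows "card As + card Bt - 1 \<le> (\<Sum>b\<in>Bt. card (nb E b \<inter> As))"
proof -
  have dis: "As \<inter> Bt = {}" using bip As Bt unfolding bipartite_on_def by blast
  have "card As + card Bt - 1 = card (As \<union> Bt) - 1" using dis fin by (simp add: card_Un_disjoint)
  also have "\<dots> \<le> card (edges2 E (As \<union> Bt))" by (rule conn_edges) (use fin conn in auto)
  also have "\<dots> \<le> card (\<Union>b\<in>Bt. (\<lambda>a. {a,b}) ` (nb E b \<inter> As))"
  proof (rule card_mono)
    show "finite (\<Union>b\<in>Bt. (\<lambda>a. {a,b}) ` (nb E b \<inter> As))" using fin by auto
    show "edges2 E (As \<union> Bt) \<subseteq> (\<Union>b\<in>Bt. (\<lambda>a. {a,b}) ` (nb E b \<inter> As))"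
    proof
      fix e assume "e \<in> edges2 E (As \<union> Bt)"
      then obtain u v where e: "e = {u,v}" "u \<in> As \<union> Bt" "v \<in> As \<union> Bt" "E u v"
        unfolding edges2_def by blast
      have sym: "E v u" using e(4) sg unfolding simple_graph_def by blast
      have "(u \<in> A \<and> v \<in> B) \<or> (u \<in> B \<and> v \<in> A)" using e(4) bip unfolding bipartite_on_def by blast
      hence "(u \<in> As \<and> v \<in> Bt) \<or> (u \<in> Bt \<and> v \<in> As)"
        using e(2,3) bip As Bt unfolding bipartite_on_def by blast
      thus "e \<in> (\<Union>b\<in>Bt. (\<lambda>a. {a,b}) ` (nb E b \<inter> As))"
      proof
        assume h: "u \<in> As \<and> v \<in> Bt"
        thus ?thesis using e sym by (intro UN_I[of v]) auto
      next
        assume h: "u \<in> Bt \<and> v \<in> As"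
        thus ?thesis using e by (intro UN_I[of u]) (auto simp: insert_commute)
      qed
    qed
  qed
  also have "\<dots> \<le> (\<Sum>b\<in>Bt. card ((\<lambda>a. {a,b}) ` (nb E b \<inter> As)))"
    by (rule card_UN_le) (use fin in auto)
  also have "\<dots> \<le> (\<Sum>b\<in>Bt. card (nb E b \<inter> As))"
    by (rule sum_mono) (rule card_image_le, use fin in auto)
  finally show ?thesis .
qed

lemma deg_pos:
  assumes bip: "bipartite_on V E A B"
    and As: "As \<subseteq> A" and Bt: "Bt \<subseteq> B" and ne: "As \<noteq> {}"
    and conn: "induced_connected E (As \<union> Bt)" and b: "b \<in> Bt" and fin: "finite As"
  shows "1 \<le> card (nb E b \<inter> As)"
proof -
  have dis: "As \<inter> Bt = {}" using bip As Bt unfolding bipartite_on_def by blast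
  obtain a where a: "a \<in> As" using ne by blast
  have "a \<notin> {b}" using a b dis by auto
  then obtain u v where uv: "u \<in> {b}" "v \<in> As \<union> Bt" "v \<notin> {b}" "E u v"
    using cross_edge[OF conn _ _ _, of "{b}" b a] a b by blast
  have "v \<in> A" using uv b Bt bip unfolding bipartite_on_def by blast
  hence "v \<in> As" using uv bip Bt unfolding bipartite_on_def by blast
  hence "v \<in> nb E b \<inter> As" using uv by auto
  thus ?thesis using fin by (metis One_nat_def Suc_leI card_gt_0_iff empty_iff finite_Int)
qed

lemma lin_nb:
  assumes sg: "simple_graph V E" and c4: "\<not> has_4_cycle E"
  shows "lin Bl (nb E)"
  unfolding lin_def
proof (intro ballI impI allI)
  fix b b' s t
  assume "b \<noteq> b'" "s \<noteq> t" "s \<in> nb E b" "t \<in> nb E b" "s \<in> nb E b'" "t \<in> nb E b'"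
  hence h: "E b s" "E b t" "E b' s" "E b' t" by auto
  have sym: "\<And>x y. E x y \<Longrightarrow> E y x" and irr: "\<And>x. \<not> E x x"
    using sg unfolding simple_graph_def by blast+
  have "distinct [b, s, b', t]" using h \<open>b \<noteq> b'\<close> \<open>s \<noteq> t\<close> irr by auto
  moreover have "E b s" "E s b'" "E b' t" "E t b" using h sym by auto
  ultimately have "has_4_cycle E" unfolding has_4_cycle_def by blast
  thus False using c4 by simp
qed



lemma le5: "(n::nat) \<le> 5 \<Longrightarrow> n = 0 \<or> n = 1 \<or> n = 2 \<or> n = 3 \<or> n = 4 \<or> n = 5" by auto

lemma ilp_red:
  fixes n11 n12 n13 n14 n21 n22 n31 :: nat
  assumes c: "n11+n12+n13+n14+n21+n22+n31 = 11"
  and sx: "n21+n22+2*n31 = 8"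
  and sy: "n12+2*n13+3*n14+n22 = 10"
  and xx: "n31 \<le> 2"
  and yy: "n12+3*n13+6*n14+n22 \<le> 15"
  and cr: "n22 \<le> 1"
  shows "(n13=5 \<and> n21=4 \<and> n31=2 \<and> n11=0\<and>n12=0\<and>n14=0\<and>n22=0) \<or>
         (n12=1 \<and> n13=4 \<and> n21=3 \<and> n22=1 \<and> n31=2 \<and> n11=0\<and>n14=0) \<or>
         (n12=2 \<and> n13=2 \<and> n14=1 \<and> n21=3 \<and> n22=1 \<and> n31=2 \<and> n11=0)"
proof -
  have "n31 = 0 \<or> n31 = 1 \<or> n31 = 2" using xx by auto
  moreover have "n22 = 0 \<or> n22 = 1" using cr by auto
  moreover have "n14 = 0 \<or> n14 = 1 \<or> n14 = 2"
  proof -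
    have "n14 \<le> 2"
    proof (rule ccontr)
      assume "\<not> n14 \<le> 2" hence "n14 \<ge> 3" by simp
      thus False using yy by linarith
    qed
    thus ?thesis by auto
  qed
  moreover have "n13 = 0 \<or> n13 = 1 \<or> n13 = 2 \<or> n13 = 3 \<or> n13 = 4 \<or> n13 = 5" using yy le5 by auto
  ultimately show ?thesis using c sx sy yy
    by (elim disjE) (simp_all, linarith?)
qed

lemma blk1:
  assumes "1 \<le> x" "1 \<le> y"
  shows "6*(x+y) \<le> x*(x-1) + y*(y-1) + 2*(x*y) + (12::nat)"
proof -
  define X where "X = int x"
  define Y where "Y = int y"
  have "(X+Y-3)*(X+Y-4) \<ge> 0"
  proof (cases "X+Y \<le> 3")
    case True
    thus ?thesis by (intro mult_nonpos_nonpos) auto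
  next
    case False
    thus ?thesis by (intro mult_nonneg_nonneg) auto
  qed
  moreover have "(X+Y-3)*(X+Y-4) = X*(X-1) + Y*(Y-1) + 2*(X*Y) - 6*(X+Y) + 12"
    by (simp add: algebra_simps)
  moreover have e1: "int (x - Suc 0) = int x - 1" "int (y - Suc 0) = int y - 1"
    using assms by (simp_all add: of_nat_diff)
  ultimately have "int (6*(x+y)) \<le> int (x*(x-1) + y*(y-1) + 2*(x*y) + 12)"
    by (simp add: X_def Y_def e1)
  thus ?thesis by linarith
qed

lemma all_eq_of_sum:
  assumes "finite S" "\<forall>z\<in>S. f z \<le> (k::nat)" "k * card S \<le> (\<Sum>z\<in>S. f z)" "z \<in> S"
  shows "f z = k"
proof (rule ccontr)
  assume "f z \<noteq> k" hence lt: "f z < k" using assms by force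
  have "(\<Sum>z\<in>S. f z) = f z + (\<Sum>z\<in>S-{z}. f z)" using assms by (simp add: sum.remove)
  also have "(\<Sum>z\<in>S-{z}. f z) \<le> card (S-{z}) * k"
    using sum_bounded_above[of "S-{z}" f k] assms by auto
  also have "card (S-{z}) = card S - 1" using assms by simp
  finally have "k * card S \<le> f z + (card S - 1) * k" using assms by linarith
  moreover have "card S > 0" using assms(1,4) by (auto simp: card_gt_0_iff)
  then obtain m where m: "card S = Suc m" using gr0_implies_Suc by blast
  ultimately show False using lt m by simp
qed

lemma sum_types:
  assumes "finite Bl" "\<forall>b\<in>Bl. x b \<in> {1,2,3} \<and> y b \<in> {1,2,3,4::nat}"
  shows "(\<Sum>b\<in>Bl. g (x b) (y b)) =
     (\<Sum>i\<in>{1,2,3::nat}. \<Sum>j\<in>{1,2,3,4::nat}. card {b\<in>Bl. x b = i \<and> y b = j} * g i j)"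
proof -
  let ?T = "{1,2,3::nat} \<times> {1,2,3,4::nat}"
  have "(\<Sum>b\<in>Bl. g (x b) (y b)) = (\<Sum>t\<in>?T. \<Sum>b\<in>{b. b\<in>Bl \<and> (x b, y b) = t}. g (x b) (y b))"
  proof (rule sum.group[where S=Bl and T="?T" and g="\<lambda>b. (x b, y b)" and h="\<lambda>b. g (x b) (y b)", symmetric])
    show "finite Bl" using assms by simp
    show "finite ?T" by simp
    show "(\<lambda>b. (x b, y b)) ` Bl \<subseteq> ?T" using assms(2) by blast
  qed
  also have "\<dots> = (\<Sum>t\<in>?T. card {b\<in>Bl. x b = fst t \<and> y b = snd t} * g (fst t) (snd t))"
  proof (rule sum.cong[OF refl])
    fix t :: "nat \<times> nat"
    have "(\<Sum>b\<in>{b. b\<in>Bl \<and> (x b, y b) = t}. g (x b) (y b)) = (\<Sum>b\<in>{b. b\<in>Bl \<and> (x b, y b) = t}. g (fst t) (snd t))"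
      by (rule sum.cong) auto
    moreover have "{b. b\<in>Bl \<and> (x b, y b) = t} = {b\<in>Bl. x b = fst t \<and> y b = snd t}" by (cases t) auto
    ultimately show "(\<Sum>b\<in>{b. b\<in>Bl \<and> (x b, y b) = t}. g (x b) (y b)) = card {b\<in>Bl. x b = fst t \<and> y b = snd t} * g (fst t) (snd t)"
      by simp
  qed
  also have "\<dots> = (\<Sum>i\<in>{1,2,3::nat}. \<Sum>j\<in>{1,2,3,4::nat}. card {b\<in>Bl. x b = i \<and> y b = j} * g i j)"
    by (simp add: sum.cartesian_product split_def)
  finally show ?thesis .
qed


lemma ilp12:
  fixes n11 n12 n13 n14 n21 n22 n23 n24 n31 n32 n33 n34 :: nat
  assumes c: "n11+n12+n13+n14+n21+n22+n23+n24+n31+n32+n33+n34 = 11"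
  and sx: "n11+n12+n13+n14+2*(n21+n22+n23+n24)+3*(n31+n32+n33+n34) = 19"
  and sy: "n11+n21+n31+2*(n12+n22+n32)+3*(n13+n23+n33)+4*(n14+n24+n34) = 21"
  and xx: "2*(n21+n22+n23+n24)+6*(n31+n32+n33+n34) \<le> 20"
  and yy: "2*(n12+n22+n32)+6*(n13+n23+n33)+12*(n14+n24+n34) \<le> 30"
  and xy: "n11+2*n12+3*n13+4*n14+2*n21+4*n22+6*n23+8*n24+3*n31+6*n32+9*n33+12*n34 \<le> 30"
  shows "n23=0 \<and> n24=0 \<and> n32=0 \<and> n33=0 \<and> n34=0 \<and> (
         (n13=5 \<and> n21=4 \<and> n31=2 \<and> n11=0\<and>n12=0\<and>n14=0\<and>n22=0) \<or>
         (n12=1 \<and> n13=4 \<and> n21=3 \<and> n22=1 \<and> n31=2 \<and> n11=0\<and>n14=0) \<or>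
         (n12=2 \<and> n13=2 \<and> n14=1 \<and> n21=3 \<and> n22=1 \<and> n31=2 \<and> n11=0))"
proof -
  have "(n11+2*n12+3*n13+4*n14+2*n21+4*n22+6*n23+8*n24+3*n31+6*n32+9*n33+12*n34) + (n11+n12+n13+n14+n21+n22+n23+n24+n31+n32+n33+n34)
     = (n11+n12+n13+n14+2*(n21+n22+n23+n24)+3*(n31+n32+n33+n34)) + (n11+n21+n31+2*(n12+n22+n32)+3*(n13+n23+n33)+4*(n14+n24+n34)) + (n22 + 2*n23+3*n24+2*n32+4*n33+6*n34)"
    by (simp add: algebra_simps)
  hence cr: "n22 + 2*n23+3*n24+2*n32+4*n33+6*n34 \<le> 1"
    using c sx sy xy by simp
  hence z: "n23=0" "n24=0" "n32=0" "n33=0" "n34=0" by auto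
  have cr2: "n22 \<le> 1" using cr by linarith
  have c': "n11+n12+n13+n14+n21+n22+n31 = 11" using c z by simp
  have sx': "n11+n12+n13+n14+2*n21+2*n22+3*n31 = 19" using sx z by simp
  have sy': "n11+n21+n31+2*n12+2*n22+3*n13+4*n14 = 21" using sy z by simp
  have e1: "n21+n22+2*n31 = 8" using c' sx' by linarith
  moreover have "n12+2*n13+3*n14+n22 = 10" using c' sy' by linarith
  moreover have "n31 \<le> 2" using xx z e1 by simp
  moreover have "n12+3*n13+6*n14+n22 \<le> 15" using yy z by simp
  moreover note c'
  ultimately show ?thesis using ilp_red[of n11 n12 n13 n14 n21 n22 n31] cr2 z by blast
qed

lemma linD:
  assumes "lin Bl F" "b \<in> Bl" "b' \<in> Bl" "s \<noteq> t" "s \<in> F b" "t \<in> F b" "s \<in> F b'" "t \<in> F b'"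
  shows "b = b'"
  using assms unfolding lin_def by blast

lemma blk_x:
  assumes "1 \<le> (x::nat)"
  shows "2*(x-1) + (if 4 \<le> x then 6 else 0) \<le> x*(x-1)"
proof (cases "4 \<le> x")
  case True
  hence "4*(x-1) \<le> x*(x-1)" by (intro mult_right_mono) auto
  moreover have "(if 4 \<le> x then 6 else 0) = (6::nat)" using True by simp
  moreover have "3 \<le> x - 1" using True by simp
  ultimately show ?thesis by linarith
next
  case False
  hence "x = 1 \<or> x = 2 \<or> x = 3" using assms by auto
  thus ?thesis by auto
qed

lemma blk_y:
  assumes "1 \<le> (y::nat)"
  shows "2*(y-1) + (if 5 \<le> y then 12 else 0) \<le> y*(y-1)"
proof (cases "5 \<le> y")
  case True
  hence "5*(y-1) \<le> y*(y-1)" by (intro mult_right_mono) auto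
  moreover have "(if 5 \<le> y then 12 else 0) = (12::nat)" using True by simp
  moreover have "4 \<le> y - 1" using True by simp
  ultimately show ?thesis by linarith
next
  case False
  hence "y = 1 \<or> y = 2 \<or> y = 3 \<or> y = 4" using assms by auto
  thus ?thesis by auto
qed

lemma sum_minus1:
  assumes "finite Bl" "\<forall>b\<in>Bl. 1 \<le> (f b::nat)"
  shows "(\<Sum>b\<in>Bl. f b - 1) + card Bl = (\<Sum>b\<in>Bl. f b)"
proof -
  have "(\<Sum>b\<in>Bl. f b) = (\<Sum>b\<in>Bl. (f b - 1) + 1)"
    by (rule sum.cong) (use assms in auto)
  also have "\<dots> = (\<Sum>b\<in>Bl. f b - 1) + card Bl"
    by (subst sum.distrib) simp
  finally show ?thesis by simp
qed

lemma empty_type: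
  assumes "finite Bl" "card {b\<in>Bl. x b = i \<and> y b = j} = 0" "b \<in> Bl" "x b = i" "y b = j"
  shows False
  using assms by auto



lemma core:
  fixes A0 A1 :: "'a set" and Bl :: "'b set" and F :: "'b \<Rightarrow> 'a set"
  assumes fA0: "finite A0" and fA1: "finite A1" and fB: "finite Bl"
    and cA0: "card A0 = 5" and cA1: "card A1 = 6" and cB: "card Bl = 11"
    and dis: "A0 \<inter> A1 = {}" and ln: "lin Bl F"
    and pos: "\<forall>b\<in>Bl. 1 \<le> card (F b \<inter> A0) \<and> 1 \<le> card (F b \<inter> A1)"
    and sx0: "19 \<le> (\<Sum>b\<in>Bl. card (F b \<inter> A0))" and sy0: "21 \<le> (\<Sum>b\<in>Bl. card (F b \<inter> A1))"
  shows False
proof -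
  define x where "x b = card (F b \<inter> A0)" for b
  define y where "y b = card (F b \<inter> A1)" for b
  define Th where "Th z = {b\<in>Bl. z \<in> F b}" for z
  have posx: "\<And>b. b \<in> Bl \<Longrightarrow> 1 \<le> x b" and posy: "\<And>b. b \<in> Bl \<Longrightarrow> 1 \<le> y b"
    using pos by (auto simp: x_def y_def)
  have ThB: "Th z \<subseteq> Bl" for z by (auto simp: Th_def)
  have fTh: "finite (Th z)" for z using fB ThB finite_subset by blast
  have Lc: "(\<Sum>b\<in>Th v. x b - 1) \<le> 4" if "v \<in> A0" for v
  proof -
    have "(\<Sum>b\<in>Th v. x b - 1) = (\<Sum>b\<in>Th v. card (F b \<inter> A0 - {v}))"
      by (rule sum.cong) (use that in \<open>auto simp: Th_def x_def\<close>)
    also have "\<dots> \<le> card (A0 - {v})" using local_bound[OF ln fA0 fB, of v] by (simp add: Th_def)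
    also have "\<dots> = 4" using that cA0 fA0 by simp
    finally show ?thesis .
  qed
  have Lg: "(\<Sum>b\<in>Th v. y b) \<le> 6" if "v \<in> A0" for v
  proof -
    have vA1: "v \<notin> A1" using that dis by auto
    hence eq: "\<And>b. F b \<inter> A1 - {v} = F b \<inter> A1" by auto
    have "(\<Sum>b\<in>Th v. y b) = (\<Sum>b\<in>Th v. card (F b \<inter> A1 - {v}))"
      by (simp add: eq y_def)
    also have "\<dots> \<le> card (A1 - {v})" using local_bound[OF ln fA1 fB, of v] by (simp add: Th_def)
    also have "\<dots> = 6" using vA1 cA1 by simp
    finally show ?thesis .
  qed
  have La: "(\<Sum>b\<in>Th z. x b) \<le> 5" if "z \<in> A1" for z
  proof -
    have vA0: "z \<notin> A0" using that dis by auto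
    hence eq: "\<And>b. F b \<inter> A0 - {z} = F b \<inter> A0" by auto
    have "(\<Sum>b\<in>Th z. x b) = (\<Sum>b\<in>Th z. card (F b \<inter> A0 - {z}))"
      by (simp add: eq x_def)
    also have "\<dots> \<le> card (A0 - {z})" using local_bound[OF ln fA0 fB, of z] by (simp add: Th_def)
    also have "\<dots> = 5" using vA0 cA0 by simp
    finally show ?thesis .
  qed
  have Lb: "(\<Sum>b\<in>Th z. y b - 1) \<le> 5" if "z \<in> A1" for z
  proof -
    have "(\<Sum>b\<in>Th z. y b - 1) = (\<Sum>b\<in>Th z. card (F b \<inter> A1 - {z}))"
      by (rule sum.cong) (use that in \<open>auto simp: Th_def y_def\<close>)
    also have "\<dots> \<le> card (A1 - {z})" using local_bound[OF ln fA1 fB, of z] by (simp add: Th_def)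
    also have "\<dots> = 5" using that cA1 fA1 by simp
    finally show ?thesis .
  qed
  have DCa: "(\<Sum>z\<in>A1. \<Sum>b\<in>Th z. x b) = (\<Sum>b\<in>Bl. x b * y b)"
    using dcount[OF fA1 fB, where F=F and g="\<lambda>z b. x b"] by (simp add: Th_def y_def mult.commute)
  have DCb: "(\<Sum>z\<in>A1. \<Sum>b\<in>Th z. y b - 1) = (\<Sum>b\<in>Bl. y b * (y b - 1))"
    using dcount[OF fA1 fB, where F=F and g="\<lambda>z b. y b - 1"] by (simp add: Th_def y_def)
  have DCg: "(\<Sum>v\<in>A0. \<Sum>b\<in>Th v. y b) = (\<Sum>b\<in>Bl. x b * y b)"
    using dcount[OF fA0 fB, where F=F and g="\<lambda>z b. y b"] by (simp add: Th_def x_def)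
  have DCc: "(\<Sum>v\<in>A0. \<Sum>b\<in>Th v. x b - 1) = (\<Sum>b\<in>Bl. x b * (x b - 1))"
    using dcount[OF fA0 fB, where F=F and g="\<lambda>z b. x b - 1"] by (simp add: Th_def x_def)
  have Gxx: "(\<Sum>b\<in>Bl. x b * (x b - 1)) \<le> 20"
    using sum_bounded_above[of A0 "\<lambda>v. \<Sum>b\<in>Th v. x b - 1" 4] Lc DCc cA0 by simp
  have Gyy: "(\<Sum>b\<in>Bl. y b * (y b - 1)) \<le> 30"
    using sum_bounded_above[of A1 "\<lambda>v. \<Sum>b\<in>Th v. y b - 1" 5] Lb DCb cA1 by simp
  have Gxy: "(\<Sum>b\<in>Bl. x b * y b) \<le> 30"
    using sum_bounded_above[of A0 "\<lambda>v. \<Sum>b\<in>Th v. y b" 6] Lg DCg cA0 by simp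
  define X where "X = (\<Sum>b\<in>Bl. x b)"
  define Y where "Y = (\<Sum>b\<in>Bl. y b)"
  have "(\<Sum>b\<in>Bl. 6*(x b + y b)) \<le> (\<Sum>b\<in>Bl. x b*(x b-1) + y b*(y b-1) + 2*(x b*y b) + 12)"
    by (rule sum_mono) (use blk1 posx posy in blast)
  hence "6*(X+Y) \<le> (\<Sum>b\<in>Bl. x b*(x b-1)) + (\<Sum>b\<in>Bl. y b*(y b-1)) + 2*(\<Sum>b\<in>Bl. x b*y b) + 12*11"
    by (simp add: sum.distrib sum_distrib_left[symmetric] X_def Y_def cB)
  hence "6*(X+Y) \<le> 242" using Gxx Gyy Gxy by linarith
  hence "X + Y \<le> 40" by presburger
  hence X19: "X = 19" and Y21: "Y = 21" using sx0 sy0 by (simp_all add: X_def Y_def x_def y_def)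
  have sxm: "(\<Sum>b\<in>Bl. x b - 1) = 8" using sum_minus1[OF fB, of x] posx X19 cB by (simp add: X_def)
  have sym: "(\<Sum>b\<in>Bl. y b - 1) = 10" using sum_minus1[OF fB, of y] posy Y21 cB by (simp add: Y_def)
  have xle3: "x b \<le> 3" if "b \<in> Bl" for b
  proof (rule ccontr)
    assume "\<not> x b \<le> 3"
    have "(\<Sum>b\<in>Bl. 2*(x b - 1) + (if 4 \<le> x b then 6 else 0)) \<le> (\<Sum>b\<in>Bl. x b*(x b - 1))"
      by (rule sum_mono) (use blk_x posx in blast)
    hence "2*8 + (\<Sum>b\<in>Bl. (if 4 \<le> x b then 6 else 0::nat)) \<le> 20"
      using Gxx sxm by (simp add: sum.distrib sum_distrib_left[symmetric])
    moreover have "(if 4 \<le> x b then 6 else 0::nat) \<le> (\<Sum>b\<in>Bl. (if 4 \<le> x b then 6 else 0::nat))"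
      by (rule member_le_sum) (use that fB in auto)
    ultimately show False using \<open>\<not> x b \<le> 3\<close> by simp
  qed
  have yle4: "y b \<le> 4" if "b \<in> Bl" for b
  proof (rule ccontr)
    assume "\<not> y b \<le> 4"
    have "(\<Sum>b\<in>Bl. 2*(y b - 1) + (if 5 \<le> y b then 12 else 0)) \<le> (\<Sum>b\<in>Bl. y b*(y b - 1))"
      by (rule sum_mono) (use blk_y posy in blast)
    hence "2*10 + (\<Sum>b\<in>Bl. (if 5 \<le> y b then 12 else 0::nat)) \<le> 30"
      using Gyy sym by (simp add: sum.distrib sum_distrib_left[symmetric])
    moreover have "(if 5 \<le> y b then 12 else 0::nat) \<le> (\<Sum>b\<in>Bl. (if 5 \<le> y b then 12 else 0::nat))"
      by (rule member_le_sum) (use that fB in auto)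
    ultimately show False using \<open>\<not> y b \<le> 4\<close> by simp
  qed
  have rng: "\<forall>b\<in>Bl. x b \<in> {1,2,3} \<and> y b \<in> {1,2,3,4::nat}"
  proof
    fix b assume b: "b \<in> Bl"
    have "1 \<le> x b" "x b \<le> 3" "1 \<le> y b" "y b \<le> 4" using b posx posy xle3 yle4 by auto
    thus "x b \<in> {1,2,3} \<and> y b \<in> {1,2,3,4::nat}" by auto
  qed
  define n where "n i j = card {b\<in>Bl. x b = i \<and> y b = j}" for i j
  have ST: "(\<Sum>b\<in>Bl. g (x b) (y b)) =
     (\<Sum>i\<in>{1,2,3::nat}. \<Sum>j\<in>{1,2,3,4::nat}. n i j * g i j)" for g
    unfolding n_def by (rule sum_types[OF fB rng])
  have c: "n 1 1+n 1 2+n 1 3+n 1 4+n 2 1+n 2 2+n 2 3+n 2 4+n 3 1+n 3 2+n 3 3+n 3 4 = 11"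
    using ST[of "\<lambda>i j. 1"] cB by simp
  have sx: "n 1 1+n 1 2+n 1 3+n 1 4+2*(n 2 1+n 2 2+n 2 3+n 2 4)+3*(n 3 1+n 3 2+n 3 3+n 3 4) = 19"
    using ST[of "\<lambda>i j. i"] X19 by (simp add: X_def algebra_simps)
  have sy: "n 1 1+n 2 1+n 3 1+2*(n 1 2+n 2 2+n 3 2)+3*(n 1 3+n 2 3+n 3 3)+4*(n 1 4+n 2 4+n 3 4) = 21"
    using ST[of "\<lambda>i j. j"] Y21 by (simp add: Y_def algebra_simps)
  have xx: "2*(n 2 1+n 2 2+n 2 3+n 2 4)+6*(n 3 1+n 3 2+n 3 3+n 3 4) \<le> 20"
    using ST[of "\<lambda>i j. i*(i-1)"] Gxx by (simp add: algebra_simps)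
  have yy: "2*(n 1 2+n 2 2+n 3 2)+6*(n 1 3+n 2 3+n 3 3)+12*(n 1 4+n 2 4+n 3 4) \<le> 30"
    using ST[of "\<lambda>i j. j*(j-1)"] Gyy by (simp add: algebra_simps)
  have xy: "n 1 1+2*n 1 2+3*n 1 3+4*n 1 4+2*n 2 1+4*n 2 2+6*n 2 3+8*n 2 4+3*n 3 1+6*n 3 2+9*n 3 3+12*n 3 4 \<le> 30"
    using ST[of "\<lambda>i j. i*j"] Gxy by (simp add: algebra_simps)
  have prof: "n 2 3=0 \<and> n 2 4=0 \<and> n 3 2=0 \<and> n 3 3=0 \<and> n 3 4=0 \<and> (
         (n 1 3=5 \<and> n 2 1=4 \<and> n 3 1=2 \<and> n 1 1=0\<and>n 1 2=0\<and>n 1 4=0\<and>n 2 2=0) \<or>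
         (n 1 2=1 \<and> n 1 3=4 \<and> n 2 1=3 \<and> n 2 2=1 \<and> n 3 1=2 \<and> n 1 1=0\<and>n 1 4=0) \<or>
         (n 1 2=2 \<and> n 1 3=2 \<and> n 1 4=1 \<and> n 2 1=3 \<and> n 2 2=1 \<and> n 3 1=2 \<and> n 1 1=0))"
    by (rule ilp12[OF c sx sy xx yy xy])
  have npos: "1 \<le> n (x b) (y b)" if "b \<in> Bl" for b
  proof -
    have "b \<in> {b'\<in>Bl. x b' = x b \<and> y b' = y b}" using that by simp
    hence "{b'\<in>Bl. x b' = x b \<and> y b' = y b} \<noteq> {}" by blast
    thus ?thesis unfolding n_def using fB by (simp add: Suc_le_eq card_gt_0_iff)
  qed
  have rng': "x b \<in> {1,2,3} \<and> y b \<in> {1,2,3,4::nat}" if "b \<in> Bl" for b using rng that by blast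
  have n31: "n 3 1 = 2" using prof by auto
  obtain be1 be2 where K31: "{b\<in>Bl. x b = 3 \<and> y b = 1} = {be1, be2}" "be1 \<noteq> be2"
    using n31 unfolding n_def by (auto simp: card_2_iff)
  have be1: "be1 \<in> Bl" "x be1 = 3" "y be1 = 1" using K31(1) by blast+
  have be2: "be2 \<in> Bl" "x be2 = 3" "y be2 = 1" using K31(1) by blast+
  have "1 \<le> card ((F be1 \<inter> A0) \<inter> (F be2 \<inter> A0))"
  proof -
    have "card (F be1 \<inter> A0) + card (F be2 \<inter> A0) = card ((F be1 \<inter> A0) \<union> (F be2 \<inter> A0)) + card ((F be1 \<inter> A0) \<inter> (F be2 \<inter> A0))"
      by (rule card_Un_Int) (use fA0 in auto)
    moreover have "card ((F be1 \<inter> A0) \<union> (F be2 \<inter> A0)) \<le> 5"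
      using cA0 card_mono[OF fA0, of "(F be1 \<inter> A0) \<union> (F be2 \<inter> A0)"] by auto
    ultimately show ?thesis using be1 be2 by (simp add: x_def)
  qed
  then obtain vs where vs: "vs \<in> A0" "vs \<in> F be1" "vs \<in> F be2"
    by (metis IntE card.empty ex_in_conv not_one_le_zero)
  obtain p1 where p1: "F be1 \<inter> A1 = {p1}" using be1(3) by (auto simp: y_def card_1_singleton_iff)
  obtain p2 where p2: "F be2 \<inter> A1 = {p2}" using be2(3) by (auto simp: y_def card_1_singleton_iff)
  have p1A: "p1 \<in> A1" "p1 \<in> F be1" and p2A: "p2 \<in> A1" "p2 \<in> F be2" using p1 p2 by auto
  have vsA: "vs \<notin> A1" using vs dis by auto
  have p12: "p1 \<noteq> p2"
  proof
    assume "p1 = p2"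
    hence "be1 = be2" using linD[OF ln be1(1) be2(1), of vs p1] vs p1A p2A vsA by auto
    thus False using K31(2) by simp
  qed
  have vsTh: "be1 \<in> Th vs" "be2 \<in> Th vs" using vs be1 be2 by (auto simp: Th_def)
  from prof consider
      (P3) "n 1 3=5 \<and> n 2 1=4 \<and> n 3 1=2 \<and> n 1 1=0\<and>n 1 2=0\<and>n 1 4=0\<and>n 2 2=0"
    | (P1) "n 1 2=1 \<and> n 1 3=4 \<and> n 2 1=3 \<and> n 2 2=1 \<and> n 3 1=2 \<and> n 1 1=0\<and>n 1 4=0"
    | (P2) "n 1 2=2 \<and> n 1 3=2 \<and> n 1 4=1 \<and> n 2 1=3 \<and> n 2 2=1 \<and> n 3 1=2 \<and> n 1 1=0"
    by blast
  then show False
  proof cases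
    case P3
    have z: "n 2 3=0" "n 2 4=0" "n 3 2=0" "n 3 3=0" "n 3 4=0" using prof by auto
    have yodd: "y b = 1 \<or> y b = 3" if "b \<in> Bl" for b
      using rng'[OF that] npos[OF that] P3 z by auto
    have "(\<Sum>b\<in>Bl. y b * (y b - 1)) = 30"
      using ST[of "\<lambda>i j. j*(j-1)"] P3 z by simp
    hence "5 * card A1 \<le> (\<Sum>z\<in>A1. \<Sum>b\<in>Th z. y b - 1)" using DCb cA1 by simp
    hence e5: "(\<Sum>b\<in>Th p1. y b - 1) = 5"
      using all_eq_of_sum[OF fA1 _ _ p1A(1), of "\<lambda>z. \<Sum>b\<in>Th z. y b - 1" 5] Lb by blast
    have "2 dvd (\<Sum>b\<in>Th p1. y b - 1)"
    proof (rule dvd_sum)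
      fix b assume "b \<in> Th p1"
      hence "y b = 1 \<or> y b = 3" using yodd ThB by blast
      thus "2 dvd (y b - 1)" by auto
    qed
    thus False using e5 by simp
  next
    case P1
    have z: "n 2 3=0" "n 2 4=0" "n 3 2=0" "n 3 3=0" "n 3 4=0" using prof by auto
    have "(\<Sum>b\<in>Bl. x b * y b) = 30"
      using ST[of "\<lambda>i j. i*j"] P1 z by simp
    hence "6 * card A0 \<le> (\<Sum>v\<in>A0. \<Sum>b\<in>Th v. y b)" using DCg cA0 by simp
    hence g6: "(\<Sum>b\<in>Th vs. y b) = 6"
      using all_eq_of_sum[OF fA0 _ _ vs(1), of "\<lambda>v. \<Sum>b\<in>Th v. y b" 6] Lg by blast
    define R where "R = Th vs - {be1, be2}"
    have fR: "finite R" using fTh by (simp add: R_def)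
    have sub: "{be1, be2} \<subseteq> Th vs" using vsTh by auto
    have "(\<Sum>b\<in>Th vs. x b - 1) = (\<Sum>b\<in>R. x b - 1) + (\<Sum>b\<in>{be1,be2}. x b - 1)"
      unfolding R_def by (rule sum.subset_diff[OF sub fTh])
    hence "(\<Sum>b\<in>R. x b - 1) + 4 \<le> 4" using Lc[OF vs(1)] be1 be2 K31(2) by simp
    hence "(\<Sum>b\<in>R. x b - 1) = 0" by simp
    hence z0: "\<forall>b\<in>R. x b - 1 = 0" using fR by simp
    have xR: "\<forall>b\<in>R. x b = 1"
    proof
      fix b assume b: "b \<in> R"
      hence "b \<in> Bl" using ThB by (auto simp: R_def)
      moreover have "x b - 1 = 0" using z0 b by blast
      ultimately show "x b = 1" using posx[of b] by linarith
    qed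
    have "(\<Sum>b\<in>Th vs. y b) = (\<Sum>b\<in>R. y b) + (\<Sum>b\<in>{be1,be2}. y b)"
      unfolding R_def by (rule sum.subset_diff[OF sub fTh])
    hence sR: "(\<Sum>b\<in>R. y b) = 4" using g6 be1 be2 K31(2) by simp
    have RB: "R \<subseteq> Bl" using ThB by (auto simp: R_def)
    have yR: "y b = 2 \<or> y b = 3" if "b \<in> R" for b
    proof -
      have "b \<in> Bl" "x b = 1" using that RB xR by auto
      thus ?thesis using rng'[of b] npos[of b] P1 by auto
    qed
    define R2 where "R2 = {b\<in>R. y b = 2}"
    define R3 where "R3 = {b\<in>R. y b = 3}"
    have "R = R2 \<union> R3" using yR by (auto simp: R2_def R3_def)
    moreover have "R2 \<inter> R3 = {}" by (auto simp: R2_def R3_def)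
    ultimately have "(\<Sum>b\<in>R. y b) = (\<Sum>b\<in>R2. y b) + (\<Sum>b\<in>R3. y b)"
      using fR by (metis finite_Un sum.union_disjoint)
    also have "(\<Sum>b\<in>R2. y b) = card R2 * 2" by (simp add: R2_def)
    also have "(\<Sum>b\<in>R3. y b) = card R3 * 3" by (simp add: R3_def)
    finally have eq4: "card R2 * 2 + card R3 * 3 = 4" using sR by simp
    have "card R2 \<le> n 1 2" unfolding n_def
      by (rule card_mono) (use fB RB xR in \<open>auto simp: R2_def\<close>)
    hence "card R2 \<le> 1" using P1 by simp
    thus False using eq4 by presburger
  next
    case P2
    have z: "n 2 3=0" "n 2 4=0" "n 3 2=0" "n 3 3=0" "n 3 4=0" using prof by auto
    have ty: "(x b = 1 \<and> (y b = 2 \<or> y b = 3 \<or> y b = 4)) \<or> (x b = 2 \<and> (y b = 1 \<or> y b = 2)) \<or> (x b = 3 \<and> y b = 1)"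
      if "b \<in> Bl" for b
      using rng'[OF that] npos[OF that] P2 z by auto
    have "(\<Sum>b\<in>Bl. x b * y b) = 30"
      using ST[of "\<lambda>i j. i*j"] P2 z by simp
    hence "5 * card A1 \<le> (\<Sum>z\<in>A1. \<Sum>b\<in>Th z. x b)" using DCa cA1 by simp
    hence a5: "(\<Sum>b\<in>Th z. x b) = 5" if "z \<in> A1" for z
      using all_eq_of_sum[OF fA1 _ _ that, of "\<lambda>z. \<Sum>b\<in>Th z. x b" 5] La by blast
    have "(\<Sum>b\<in>Bl. y b * (y b - 1)) = 30"
      using ST[of "\<lambda>i j. j*(j-1)"] P2 z by simp
    hence "5 * card A1 \<le> (\<Sum>z\<in>A1. \<Sum>b\<in>Th z. y b - 1)" using DCb cA1 by simp
    hence b5: "(\<Sum>b\<in>Th z. y b - 1) = 5" if "z \<in> A1" for z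
      using all_eq_of_sum[OF fA1 _ _ that, of "\<lambda>z. \<Sum>b\<in>Th z. y b - 1" 5] Lb by blast
    define K4 where "K4 = {b\<in>Bl. x b = 1 \<and> y b = 4}"
    have cK4: "card K4 = 1" using P2 by (simp add: K4_def n_def)
    have key: "\<exists>b4 c. b4 \<in> K4 \<and> c \<in> Bl \<and> p \<in> F b4 \<and> p \<in> F c \<and> y c = 3"
      if pA: "p \<in> A1" and bB: "be \<in> Bl" and pb: "p \<in> F be" and xb: "x be = 3" and yb: "y be = 1" for p be
    proof -
      define R where "R = Th p - {be}"
      have beTh: "be \<in> Th p" using bB pb by (simp add: Th_def)
      have fR: "finite R" using fTh by (simp add: R_def)
      have RB: "R \<subseteq> Bl" using ThB by (auto simp: R_def)
      have "(\<Sum>b\<in>Th p. x b) = x be + (\<Sum>b\<in>R. x b)"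
        unfolding R_def using beTh fTh by (simp add: sum.remove)
      hence sx2: "(\<Sum>b\<in>R. x b) = 2" using a5[OF pA] xb by simp
      have "(\<Sum>b\<in>Th p. y b - 1) = (y be - 1) + (\<Sum>b\<in>R. y b - 1)"
        unfolding R_def using beTh fTh by (simp add: sum.remove)
      hence sy5: "(\<Sum>b\<in>R. y b - 1) = 5" using b5[OF pA] yb by simp
      define R3 where "R3 = {b\<in>R. y b = 3}"
      define R4 where "R4 = {b\<in>R. y b = 4}"
      have fR3: "finite R3" "finite R4" using fR by (auto simp: R3_def R4_def)
      have blk: "y b - 1 \<le> x b + (if y b = 3 then 1 else 0) + (if y b = 4 then 2 else 0)" if "b \<in> R" for b
      proof -
        have "b \<in> Bl" using that RB by blast
        from ty[OF this] show ?thesis by auto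
      qed
      have "(\<Sum>b\<in>R. y b - 1) \<le> (\<Sum>b\<in>R. x b + (if y b = 3 then 1 else 0) + (if y b = 4 then 2 else 0))"
        by (rule sum_mono) (rule blk)
      also have "\<dots> = (\<Sum>b\<in>R. x b) + card R3 + 2 * card R4"
        using fR by (simp add: sum.distrib R3_def R4_def sum.If_cases Int_def mult.commute)
      finally have i1: "5 \<le> 2 + card R3 + 2 * card R4" using sx2 sy5 by simp
      have "R4 \<subseteq> K4"
      proof
        fix b assume b: "b \<in> R4"
        hence bB: "b \<in> Bl" "y b = 4" using RB by (auto simp: R4_def)
        from ty[OF bB(1)] bB(2) have "x b = 1" by auto
        thus "b \<in> K4" using bB by (simp add: K4_def)
      qed
      hence i2: "card R4 \<le> 1" using cK4 card_mono[of K4 R4] fB by (simp add: K4_def)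
      have "card (R3 \<union> R4) = (\<Sum>b\<in>R3 \<union> R4. 1)" by simp
      also have "\<dots> \<le> (\<Sum>b\<in>R3 \<union> R4. x b)"
        by (rule sum_mono) (use posx RB in \<open>auto simp: R3_def R4_def\<close>)
      also have "\<dots> \<le> (\<Sum>b\<in>R. x b)"
        by (rule sum_mono2) (use fR in \<open>auto simp: R3_def R4_def\<close>)
      finally have "card (R3 \<union> R4) \<le> 2" using sx2 by simp
      moreover have "card (R3 \<union> R4) = card R3 + card R4"
        by (rule card_Un_disjoint) (use fR3 in \<open>auto simp: R3_def R4_def\<close>)
      ultimately have i3: "card R3 + card R4 \<le> 2" by simp
      have "card R4 = 1" "1 \<le> card R3" using i1 i2 i3 by linarith+
      then obtain b4 c where b4: "b4 \<in> R4" and c: "c \<in> R3"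
        by (metis One_nat_def card.empty ex_in_conv not_one_le_zero zero_neq_one)
      have "b4 \<in> K4" using b4 \<open>R4 \<subseteq> K4\<close> by blast
      moreover have "c \<in> Bl" "p \<in> F b4" "p \<in> F c" "y c = 3"
        using b4 c RB by (auto simp: R3_def R4_def R_def Th_def)
      ultimately show ?thesis by blast
    qed
    obtain b4 c1 where h1: "b4 \<in> K4" "c1 \<in> Bl" "p1 \<in> F b4" "p1 \<in> F c1" "y c1 = 3"
      using key[OF p1A(1) be1(1) p1A(2) be1(2) be1(3)] by blast
    obtain b4' c2 where h2: "b4' \<in> K4" "c2 \<in> Bl" "p2 \<in> F b4'" "p2 \<in> F c2" "y c2 = 3"
      using key[OF p2A(1) be2(1) p2A(2) be2(2) be2(3)] by blast
    have "b4' = b4" using cK4 h1(1) h2(1) by (metis card_1_singletonE singletonD)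
    hence p2b: "p2 \<in> F b4" using h2 by simp
    have b4B: "b4 \<in> Bl" "y b4 = 4" using h1(1) by (auto simp: K4_def)
    define D where "D = A1 - F b4"
    have fD: "finite D" using fA1 by (simp add: D_def)
    have "card D = card A1 - card (A1 \<inter> F b4)"
      unfolding D_def by (rule card_Diff_subset_Int) (use fA1 in auto)
    moreover have "A1 \<inter> F b4 = F b4 \<inter> A1" by auto
    ultimately have cD: "card D = 2" using cA1 b4B by (simp add: y_def)
    have claim: "F c \<inter> A1 - {p} = D"
      if cB': "c \<in> Bl" and yc: "y c = 3" and pA: "p \<in> A1" and pc: "p \<in> F c" and pb: "p \<in> F b4" for c p
    proof -
      have sub: "F c \<inter> A1 - {p} \<subseteq> D"
      proof
        fix w assume w: "w \<in> F c \<inter> A1 - {p}"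
        show "w \<in> D"
        proof (rule ccontr)
          assume "w \<notin> D"
          hence "w \<in> F b4" using w by (auto simp: D_def)
          hence "c = b4" using linD[OF ln cB' b4B(1), of p w] w pc pb by auto
          thus False using yc b4B by simp
        qed
      qed
      have "card (F c \<inter> A1 - {p}) = 2" using yc pA pc by (simp add: y_def)
      thus ?thesis using card_subset_eq[OF fD sub] cD by simp
    qed
    have D1: "D \<subseteq> F c1" using claim[OF h1(2) h1(5) p1A(1) h1(4) h1(3)] by blast
    have D2: "D \<subseteq> F c2" using claim[OF h2(2) h2(5) p2A(1) h2(4) p2b] by blast
    obtain d1 d2 where d: "D = {d1, d2}" "d1 \<noteq> d2" using cD by (auto simp: card_2_iff)
    have "c1 = c2" using linD[OF ln h1(2) h2(2), of d1 d2] d D1 D2 by auto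
    hence "c1 = b4" using linD[OF ln h1(2) b4B(1), of p1 p2] p12 h1 h2 p2b by auto
    thus False using h1(5) b4B(2) by simp
  qed
qed



lemma cs_nat:
  assumes "finite S"
  shows "(\<Sum>i\<in>S. (f i::nat))^2 \<le> card S * (\<Sum>i\<in>S. f i * f i)"
proof -
  have "(\<Sum>i\<in>S. real (f i) * 1)\<^sup>2 \<le> (\<Sum>i\<in>S. (real (f i))\<^sup>2) * (\<Sum>i\<in>S. (1::real)\<^sup>2)"
    by (rule Cauchy_Schwarz_ineq_sum)
  hence "real ((\<Sum>i\<in>S. f i)^2) \<le> real ((\<Sum>i\<in>S. f i * f i) * card S)"
    by (simp add: power2_eq_square)
  hence "(\<Sum>i\<in>S. f i)^2 \<le> (\<Sum>i\<in>S. f i * f i) * card S" by (simp only: of_nat_le_iff)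
  thus ?thesis by (simp add: mult.commute)
qed

lemma enum20: "(2::nat) \<le> p \<Longrightarrow> p \<le> 20 \<Longrightarrow> p = 2 \<or> p = 3 \<or> p = 4 \<or> p = 5 \<or> p = 6 \<or> p = 7 \<or> p = 8 \<or> p = 9 \<or> p = 10 \<or> p = 11 \<or> p = 12 \<or> p = 13 \<or> p = 14 \<or> p = 15 \<or> p = 16 \<or> p = 17 \<or> p = 18 \<or> p = 19 \<or> p = 20"
  by presburger

lemma fin22: fixes p q :: nat
  assumes "2 \<le> p" "2 \<le> q" "p + q \<le> 22"
   "(2*(p+q)-4)^2 \<le> q*(p*(p-1) + (2*(p+q)-4))" "(2*(p+q)-4)^2 \<le> p*(q*(q-1) + (2*(p+q)-4))"
  shows "p = 11 \<and> q = 11"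
proof -
  have "p \<le> 20" "q \<le> 20" using assms by linarith+
  hence P: "p = 2 \<or> p = 3 \<or> p = 4 \<or> p = 5 \<or> p = 6 \<or> p = 7 \<or> p = 8 \<or> p = 9 \<or> p = 10 \<or> p = 11 \<or> p = 12 \<or> p = 13 \<or> p = 14 \<or> p = 15 \<or> p = 16 \<or> p = 17 \<or> p = 18 \<or> p = 19 \<or> p = 20" and Q: "q = 2 \<or> q = 3 \<or> q = 4 \<or> q = 5 \<or> q = 6 \<or> q = 7 \<or> q = 8 \<or> q = 9 \<or> q = 10 \<or> q = 11 \<or> q = 12 \<or> q = 13 \<or> q = 14 \<or> q = 15 \<or> q = 16 \<or> q = 17 \<or> q = 18 \<or> q = 19 \<or> q = 20" using enum20 assms by blast+
  show ?thesis using P Q assms(3-5) by (elim disjE) simp_all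
qed

lemma mono_sq:
  fixes e c q X :: nat
  assumes "e*e \<le> q*(X + e)" "c \<le> e" "q \<le> c"
  shows "c*c \<le> q*(X + c)"
proof -
  have "int c * int c - int q * int c \<le> int e * int e - int q * int e"
  proof -
    have "(int e - int c) * (int e + int c - int q) \<ge> 0"
      using assms by (intro mult_nonneg_nonneg) auto
    thus ?thesis by (simp add: algebra_simps)
  qed
  moreover have "int e * int e \<le> int q * (int X + int e)"
    using assms(1) by (metis of_nat_add of_nat_le_iff of_nat_mult)
  ultimately have "int c * int c \<le> int q * (int X + int c)" by (simp add: algebra_simps)
  thus ?thesis by (metis of_nat_add of_nat_le_iff of_nat_mult)
qed

lemma xy_ge:
  assumes "1 \<le> (x::nat)" "1 \<le> y"
  shows "x + y \<le> x * y + 1"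
proof -
  have "(x - 1) * (y - 1) \<ge> 0" by simp
  have "x * y = (x - 1) * (y - 1) + x + y - 1" using assms
    by (cases x; cases y) (auto simp: algebra_simps)
  thus ?thesis by linarith
qed


theorem mainTheorem15:
  fixes V :: "'a set" and E :: "'a \<Rightarrow> 'a \<Rightarrow> bool"
  assumes "sizeable V E"
  shows "infinite V \<or> 23 \<le> card V"
proof (rule ccontr)
  assume neg: "\<not> (infinite V \<or> 23 \<le> card V)"
  hence fV: "finite V" and small: "card V \<le> 22" by auto
  have sg: "simple_graph V E" using assms unfolding sizeable_def by blast
  obtain A B A0 A1 B0 B1 where bip: "bipartite_on V E A B" and c4: "\<not> has_4_cycle E"
    and ne: "A0 \<noteq> {}" "A1 \<noteq> {}" "B0 \<noteq> {}" "B1 \<noteq> {}"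
    and pA: "A0 \<inter> A1 = {}" "A0 \<union> A1 = A" and pB: "B0 \<inter> B1 = {}" "B0 \<union> B1 = B"
    and c00: "induced_connected E (A0 \<union> B0)" and c01: "induced_connected E (A0 \<union> B1)"
    and c10: "induced_connected E (A1 \<union> B0)" and c11: "induced_connected E (A1 \<union> B1)"
    using assms unfolding sizeable_def by blast
  have AB: "A \<inter> B = {}" "A \<union> B = V" using bip unfolding bipartite_on_def by auto
  have fA: "finite A" "finite B" using fV AB by (auto intro: finite_subset)
  have fA0: "finite A0" "finite A1" "finite B0" "finite B1" using fA pA pB by auto
  have sub: "A0 \<subseteq> A" "A1 \<subseteq> A" "B0 \<subseteq> B" "B1 \<subseteq> B" using pA pB by auto
  define a0 where "a0 = card A0"
  define a1 where "a1 = card A1"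
  define b0 where "b0 = card B0"
  define b1 where "b1 = card B1"
  have cA: "card A = a0 + a1" using pA fA0 by (simp add: a0_def a1_def card_Un_disjoint[symmetric])
  have cB: "card B = b0 + b1" using pB fA0 by (simp add: b0_def b1_def card_Un_disjoint[symmetric])
  have cV: "card V = card A + card B" using AB fA by (simp add: card_Un_disjoint[symmetric])
  have pos0: "1 \<le> a0" "1 \<le> a1" "1 \<le> b0" "1 \<le> b1" using ne fA0
    by (auto simp: a0_def a1_def b0_def b1_def Suc_le_eq card_gt_0_iff)
  have lnB: "lin B (nb E)" and lnA: "lin A (nb E)" using lin_nb[OF sg c4] by auto
  define e00 where "e00 = (\<Sum>b\<in>B0. card (nb E b \<inter> A0))"
  define e01 where "e01 = (\<Sum>b\<in>B1. card (nb E b \<inter> A0))"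
  define e10 where "e10 = (\<Sum>b\<in>B0. card (nb E b \<inter> A1))"
  define e11 where "e11 = (\<Sum>b\<in>B1. card (nb E b \<inter> A1))"
  have E00: "a0 + b0 - 1 \<le> e00" unfolding e00_def a0_def b0_def
    by (rule edges_bip[OF bip sg sub(1) sub(3) fA0(1) fA0(3) c00])
  have E01: "a0 + b1 - 1 \<le> e01" unfolding e01_def a0_def b1_def
    by (rule edges_bip[OF bip sg sub(1) sub(4) fA0(1) fA0(4) c01])
  have E10: "a1 + b0 - 1 \<le> e10" unfolding e10_def a1_def b0_def
    by (rule edges_bip[OF bip sg sub(2) sub(3) fA0(2) fA0(3) c10])
  have E11: "a1 + b1 - 1 \<le> e11" unfolding e11_def a1_def b1_def
    by (rule edges_bip[OF bip sg sub(2) sub(4) fA0(2) fA0(4) c11])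
  have degpos: "1 \<le> card (nb E b \<inter> A0) \<and> 1 \<le> card (nb E b \<inter> A1)" if "b \<in> B" for b
  proof (cases "b \<in> B0")
    case True
    thus ?thesis using deg_pos[OF bip sub(1) sub(3) ne(1) c00 True fA0(1)]
        deg_pos[OF bip sub(2) sub(3) ne(2) c10 True fA0(2)] by simp
  next
    case False
    hence "b \<in> B1" using that pB by auto
    thus ?thesis using deg_pos[OF bip sub(1) sub(4) ne(1) c01 _ fA0(1)]
        deg_pos[OF bip sub(2) sub(4) ne(2) c11 _ fA0(2)] by simp
  qed
  define SA0 where "SA0 = (\<Sum>b\<in>B. card (nb E b \<inter> A0))"
  define SA1 where "SA1 = (\<Sum>b\<in>B. card (nb E b \<inter> A1))"
  have SA0e: "SA0 = e00 + e01" unfolding SA0_def e00_def e01_def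
    using pB fA0 by (simp add: sum.union_disjoint[symmetric])
  have SA1e: "SA1 = e10 + e11" unfolding SA1_def e10_def e11_def
    using pB fA0 by (simp add: sum.union_disjoint[symmetric])
  define e where "e = (\<Sum>b\<in>B. card (nb E b \<inter> A))"
  have dA: "card (nb E b \<inter> A) = card (nb E b \<inter> A0) + card (nb E b \<inter> A1)" for b
  proof -
    have "nb E b \<inter> A = (nb E b \<inter> A0) \<union> (nb E b \<inter> A1)" using pA by auto
    moreover have "(nb E b \<inter> A0) \<inter> (nb E b \<inter> A1) = {}" using pA by auto
    ultimately show ?thesis using fA0 by (simp add: card_Un_disjoint)
  qed
  have eS: "e = SA0 + SA1" unfolding e_def SA0_def SA1_def by (simp add: dA sum.distrib)
  have E': "a0 + b0 \<le> e00 + 1" "a0 + b1 \<le> e01 + 1" "a1 + b0 \<le> e10 + 1" "a1 + b1 \<le> e11 + 1"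
    using E00 E01 E10 E11 pos0 by linarith+
  have elow': "2*(card A + card B) \<le> e + 4" unfolding cA cB eS SA0e SA1e using E' by simp
  hence elow: "2*(card A + card B) - 4 \<le> e" by linarith
  have PB: "(\<Sum>b\<in>B. card (nb E b \<inter> A) * (card (nb E b \<inter> A) - 1)) \<le> card A * (card A - 1)"
    by (rule pair_diag[OF lnB fA(1) fA(2)])
  have PA: "(\<Sum>a\<in>A. card (nb E a \<inter> B) * (card (nb E a \<inter> B) - 1)) \<le> card B * (card B - 1)"
    by (rule pair_diag[OF lnA fA(2) fA(1)])
  have eA: "(\<Sum>a\<in>A. card (nb E a \<inter> B)) = e"
  proof -
    have sym: "\<And>u v. E u v = E v u" using sg unfolding simple_graph_def by blast
    have "(\<Sum>z\<in>A. \<Sum>b\<in>{b\<in>B. z \<in> nb E b}. (1::nat)) = (\<Sum>b\<in>B. \<Sum>z\<in>nb E b \<inter> A. 1)"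
      by (rule dcount[OF fA(1) fA(2)])
    moreover have "\<And>z. {b\<in>B. z \<in> nb E b} = nb E z \<inter> B" using sym by auto
    ultimately show ?thesis unfolding e_def by simp
  qed
  have sqB: "e*e \<le> card B * (card A * (card A - 1) + e)"
  proof -
    have "e^2 \<le> card B * (\<Sum>b\<in>B. card (nb E b \<inter> A) * card (nb E b \<inter> A))"
      unfolding e_def by (rule cs_nat[OF fA(2)])
    moreover have "(\<Sum>b\<in>B. card (nb E b \<inter> A) * card (nb E b \<inter> A))
        = (\<Sum>b\<in>B. card (nb E b \<inter> A) * (card (nb E b \<inter> A) - 1)) + e"
    proof -
      have "(\<Sum>b\<in>B. card (nb E b \<inter> A) * card (nb E b \<inter> A))
          = (\<Sum>b\<in>B. card (nb E b \<inter> A) * (card (nb E b \<inter> A) - 1) + card (nb E b \<inter> A))"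
        by (rule sum.cong[OF refl]) (simp add: diff_mult_distrib2)
      thus ?thesis unfolding e_def by (simp add: sum.distrib)
    qed
    ultimately have "e^2 \<le> card B * ((\<Sum>b\<in>B. card (nb E b \<inter> A) * (card (nb E b \<inter> A) - 1)) + e)" by simp
    also have "\<dots> \<le> card B * (card A * (card A - 1) + e)" using PB by simp
    finally show ?thesis by (simp add: power2_eq_square)
  qed
  have sqA: "e*e \<le> card A * (card B * (card B - 1) + e)"
  proof -
    have "e^2 \<le> card A * (\<Sum>a\<in>A. card (nb E a \<inter> B) * card (nb E a \<inter> B))"
      using cs_nat[OF fA(1), of "\<lambda>a. card (nb E a \<inter> B)"] eA by simp
    moreover have "(\<Sum>a\<in>A. card (nb E a \<inter> B) * card (nb E a \<inter> B))
        = (\<Sum>a\<in>A. card (nb E a \<inter> B) * (card (nb E a \<inter> B) - 1)) + e"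
    proof -
      have "(\<Sum>a\<in>A. card (nb E a \<inter> B) * card (nb E a \<inter> B))
          = (\<Sum>a\<in>A. card (nb E a \<inter> B) * (card (nb E a \<inter> B) - 1) + card (nb E a \<inter> B))"
        by (rule sum.cong[OF refl]) (simp add: diff_mult_distrib2)
      thus ?thesis using eA by (simp add: sum.distrib)
    qed
    ultimately have "e^2 \<le> card A * ((\<Sum>a\<in>A. card (nb E a \<inter> B) * (card (nb E a \<inter> B) - 1)) + e)" by simp
    also have "\<dots> \<le> card A * (card B * (card B - 1) + e)" using PA by simp
    finally show ?thesis by (simp add: power2_eq_square)
  qed
  define c where "c = 2*(card A + card B) - 4"
  have pq2: "2 \<le> card A" "2 \<le> card B" using cA cB pos0 by auto
  have c1: "(2*(card A + card B) - 4)^2 \<le> card B * (card A * (card A - 1) + (2*(card A + card B) - 4))"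
    using mono_sq[OF sqB, of c] elow pq2 by (simp add: c_def power2_eq_square)
  have c2: "(2*(card A + card B) - 4)^2 \<le> card A * (card B * (card B - 1) + (2*(card A + card B) - 4))"
    using mono_sq[OF sqA, of c] elow pq2 by (simp add: c_def power2_eq_square)
  have pq11: "card A = 11 \<and> card B = 11"
    by (rule fin22[OF pq2 _ c1 c2]) (use small cV in linarith)
  have cross: "(\<Sum>b\<in>B. card (nb E b \<inter> A1) * card (nb E b \<inter> A0)) \<le> a1 * a0"
    unfolding a0_def a1_def by (rule pair_cross[OF lnB fA0(1) fA0(2) fA(2) pA(1)])
  have "(\<Sum>b\<in>B. card (nb E b \<inter> A1) + card (nb E b \<inter> A0)) \<le> (\<Sum>b\<in>B. card (nb E b \<inter> A1) * card (nb E b \<inter> A0) + 1)"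
    by (rule sum_mono) (use degpos xy_ge in blast)
  moreover have "(\<Sum>b\<in>B. card (nb E b \<inter> A1) * card (nb E b \<inter> A0) + 1) = (\<Sum>b\<in>B. card (nb E b \<inter> A1) * card (nb E b \<inter> A0)) + card B"
    by (subst sum.distrib) simp
  moreover have "(\<Sum>b\<in>B. card (nb E b \<inter> A1) + card (nb E b \<inter> A0)) = e"
    using eS by (simp add: sum.distrib SA0_def SA1_def)
  ultimately have "e \<le> a1 * a0 + card B" using cross by linarith
  hence "29 \<le> a0 * a1" using elow pq11 by (simp add: mult.commute)
  moreover have "a0 + a1 = 11" using cA pq11 by simp
  ultimately have a56: "(a0 = 5 \<and> a1 = 6) \<or> (a0 = 6 \<and> a1 = 5)"
  proof -
    assume h: "29 \<le> a0 * a1" "a0 + a1 = 11"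
    have "a0 \<le> 11" using h by simp
    hence "a0 = 0 \<or> a0 = 1 \<or> a0 = 2 \<or> a0 = 3 \<or> a0 = 4 \<or> a0 = 5 \<or> a0 = 6 \<or> a0 = 7 \<or> a0 = 8 \<or> a0 = 9 \<or> a0 = 10 \<or> a0 = 11"
      by presburger
    thus ?thesis using h by (elim disjE) auto
  qed
  have cBl: "card B = 11" using pq11 by simp
  have SA0b: "2*a0 + 9 \<le> SA0" using SA0e E'(1,2) cB cBl by linarith
  have SA1b: "2*a1 + 9 \<le> SA1" using SA1e E'(3,4) cB cBl by linarith
  from a56 show False
  proof
    assume h: "a0 = 5 \<and> a1 = 6"
    show False
    proof (rule core[OF fA0(1) fA0(2) fA(2) _ _ cBl pA(1) lnB])
      show "card A0 = 5" "card A1 = 6" using h by (simp_all add: a0_def a1_def)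
      show "\<forall>b\<in>B. 1 \<le> card (nb E b \<inter> A0) \<and> 1 \<le> card (nb E b \<inter> A1)" using degpos by blast
      show "19 \<le> (\<Sum>b\<in>B. card (nb E b \<inter> A0))" using SA0b h by (simp add: SA0_def)
      show "21 \<le> (\<Sum>b\<in>B. card (nb E b \<inter> A1))" using SA1b h by (simp add: SA1_def)
    qed
  next
    assume h: "a0 = 6 \<and> a1 = 5"
    have pA': "A1 \<inter> A0 = {}" using pA by auto
    show False
    proof (rule core[OF fA0(2) fA0(1) fA(2) _ _ cBl pA' lnB])
      show "card A1 = 5" "card A0 = 6" using h by (simp_all add: a0_def a1_def)
      show "\<forall>b\<in>B. 1 \<le> card (nb E b \<inter> A1) \<and> 1 \<le> card (nb E b \<inter> A0)" using degpos by blast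
      show "19 \<le> (\<Sum>b\<in>B. card (nb E b \<inter> A1))" using SA1b h by (simp add: SA1_def)
      show "21 \<le> (\<Sum>b\<in>B. card (nb E b \<inter> A0))" using SA0b h by (simp add: SA0_def)
    qed
  qed
qed


end
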